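(* Let $\Gamma$ be a Carleson curve and $t_0\in\Gamma$. Suppose $w:\Gamma\setminus\{t_0\}\to(0,\infty)$ is continuous and $W_{t_0}w$ is regular. Let $\varepsilon>0$ and $0<\delta<d_{t_0}$. Then there exist constants $C_1,C_2>0$ (depending on $\varepsilon,\delta,w$) such that \[ \frac{w(t)}{w(\tau)}\le C_1\left|\frac{t-t_0}{\tau-t_0}\right|^{\beta(W_{t_0}w)+\varepsilon} \] for all $t\in\Gamma\setminus\omega(t_0,\delta)$ and all $\tau\in\omega(t_0,\delta)$, and \[ \frac{w(t)}{w(\tau)}\le C_2\left|\frac{t-t_0}{\tau-t_0}\right|^{\alpha(W_{t_0}w)-\varepsilon} \] for all $t\in\omega(t_0,\delta)$ and all $\tau\in\Gamma\setminus\omega(t_0,\delta)$.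
   Context: $\Gamma$ is a simple (homeomorphic to a segment or a circle) rectifiable curve in $\mathbb{C}$ with arc-length measure; it is Carleson if $\sup_{t\in\Gamma}\sup_{\varepsilon>0}|\{\tau\in\Gamma:|\tau-t|<\varepsilon\}|/\varepsilon<\infty$. $d_{t_0}:=\max_{\tau\in\Gamma}|\tau-t_0|$. $\omega(t_0,\delta)$ denotes the open arc of $\Gamma$ containing $t_0$ whose endpoints lie on the circle $\{\tau\in\mathbb{C}:|\tau-t_0|=\delta\}$. For continuous $\psi:\Gamma\setminus\{t_0\}\to(0,\infty)$ define $(W_{t_0}\psi)(x):=\sup_{0<R\le d_{t_0}}\big(\max_{|\tau-t_0|=xR}\psi(\tau)/\min_{|\tau-t_0|=R}\psi(\tau)\big)$ for $x\in(0,1]$ and $(W_{t_0}\psi)(x):=\sup_{0<R\le d_{t_0}}\big(\max_{|\tau-t_0|=R}\psi(\tau)/\min_{|\tau-t_0|=x^{-1}R}\psi(\tau)\big)$ for $x\in[1,\infty)$, with max/min over $\tau\in\Gamma$; this function is submultiplicative. A function $\varrho:(0,\infty)\to(0,\infty]$ is regular if it is bounded above in a neighborhood of $1$; for a regular submultiplicative $\varrho$, $\alpha(\varrho):=\sup_{x\in(0,1)}\frac{\log\varrho(x)}{\log x}$ and $\beta(\varrho):=\inf_{x\in(1,\infty)}\frac{\log\varrho(x)}{\log x}$. *)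

theory Defs
  imports "HOL-Analysis.Analysis"
begin

definition polygonal_sums :: "(real \<Rightarrow> complex) \<Rightarrow> real \<Rightarrow> real \<Rightarrow> real set" where
  "polygonal_sums g a b =
     {\<Sum>i<n. cmod (g (p (Suc i)) - g (p i)) | p n.
        p 0 = a \<and> p n = b \<and> (\<forall>i<n. p i \<le> p (Suc i))}"

definition rectifiable_path :: "(real \<Rightarrow> complex) \<Rightarrow> bool" where
  "rectifiable_path g \<longleftrightarrow> path g \<and> bdd_above (polygonal_sums g 0 1)"

definition arclen :: "(real \<Rightarrow> complex) \<Rightarrow> real \<Rightarrow> real" where
  "arclen g u = (if u \<le> 0 then 0 else Sup (polygonal_sums g 0 (min u 1)))"

text \<open>Arc-length measure on the curve, as push-forward of the Lebesgue-Stieltjes measure of arclen.\<close>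
definition arc_measure :: "(real \<Rightarrow> complex) \<Rightarrow> complex set \<Rightarrow> ennreal" where
  "arc_measure g A = emeasure (interval_measure (arclen g)) {u \<in> {0..1}. g u \<in> A}"

definition carleson_curve :: "(real \<Rightarrow> complex) \<Rightarrow> bool" where
  "carleson_curve g \<longleftrightarrow> simple_path g \<and> rectifiable_path g \<and>
     (\<exists>C::real. \<forall>t\<in>path_image g. \<forall>\<epsilon>>0.
        arc_measure g {\<tau> \<in> path_image g. cmod (\<tau> - t) < \<epsilon>} \<le> ennreal (C * \<epsilon>))"

definition dmax :: "complex set \<Rightarrow> complex \<Rightarrow> real" where
  "dmax \<Gamma> t0 = Sup ((\<lambda>\<tau>. cmod (\<tau> - t0)) ` \<Gamma>)"

definition omega_arc :: "complex set \<Rightarrow> complex \<Rightarrow> real \<Rightarrow> complex set" where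
  "omega_arc \<Gamma> t0 \<delta> = connected_component_set {\<tau> \<in> \<Gamma>. cmod (\<tau> - t0) < \<delta>} t0"

definition circ_pts :: "complex set \<Rightarrow> complex \<Rightarrow> real \<Rightarrow> complex set" where
  "circ_pts \<Gamma> t0 r = {\<tau> \<in> \<Gamma>. cmod (\<tau> - t0) = r}"

definition Wfun :: "complex set \<Rightarrow> complex \<Rightarrow> (complex \<Rightarrow> real) \<Rightarrow> real \<Rightarrow> ereal" where
  "Wfun \<Gamma> t0 \<psi> x =
     (if x \<le> 1 then
        (SUP R\<in>{0<..dmax \<Gamma> t0}.
           ereal (Sup (\<psi> ` circ_pts \<Gamma> t0 (x * R)) / Inf (\<psi> ` circ_pts \<Gamma> t0 R)))
      else
        (SUP R\<in>{0<..dmax \<Gamma> t0}.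
           ereal (Sup (\<psi> ` circ_pts \<Gamma> t0 R) / Inf (\<psi> ` circ_pts \<Gamma> t0 (R / x)))))"

definition regular_fun :: "(real \<Rightarrow> ereal) \<Rightarrow> bool" where
  "regular_fun \<rho> \<longleftrightarrow> (\<exists>\<eta>>0. \<exists>M::real. \<forall>x. 0 < x \<and> \<bar>x - 1\<bar> < \<eta> \<longrightarrow> \<rho> x \<le> ereal M)"

text \<open>Indices; log oo is taken as oo (irrelevant for regular submultiplicative functions, which are finite).\<close>
definition alpha_idx :: "(real \<Rightarrow> ereal) \<Rightarrow> ereal" where
  "alpha_idx \<rho> = (SUP x\<in>{0<..<1}.
     (if \<rho> x = \<infinity> then -\<infinity> else ereal (ln (real_of_ereal (\<rho> x)) / ln x)))"

definition beta_idx :: "(real \<Rightarrow> ereal) \<Rightarrow> ereal" where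
  "beta_idx \<rho> = (INF x\<in>{1<..}.
     (if \<rho> x = \<infinity> then \<infinity> else ereal (ln (real_of_ereal (\<rho> x)) / ln x)))"

end

theory Submission imports Defs begin
definition Pk :: "(real \<Rightarrow> real) \<Rightarrow> (real \<Rightarrow> real) \<Rightarrow> real \<Rightarrow> real \<Rightarrow> real \<Rightarrow> bool" where
  "Pk S I D x K \<longleftrightarrow> (\<forall>u v. 0 < u \<longrightarrow> u \<le> D \<longrightarrow> 0 < v \<longrightarrow> v \<le> D \<longrightarrow> u = x * v \<longrightarrow> S u / I v \<le> K)"

locale SIloc =
  fixes S I :: "real \<Rightarrow> real" and D :: real
  assumes Dpos: "D > 0"
    and SI: "\<And>u. 0 < u \<Longrightarrow> u \<le> D \<Longrightarrow> 0 < I u \<and> I u \<le> S u"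
begin

abbreviation "P \<equiv> Pk S I D"

lemma P_mono: "P x K \<Longrightarrow> K \<le> K' \<Longrightarrow> P x K'"
  unfolding Pk_def by (blast intro: order_trans)

lemma P_mult:
  assumes x: "x > 0" and y: "y > 0" and P1: "P x K1" and P2: "P y K2"
  shows "P (x * y) (K1 * K2)"
  unfolding Pk_def
proof (intro allI impI)
  fix u v assume u: "0 < u" "u \<le> D" and v: "0 < v" "v \<le> D" and uv: "u = x * y * v"
  have key: "S u / I v \<le> (S u / I m) * (S m / I v)" if m: "0 < m" "m \<le> D" for m
  proof -
    have "0 < I m" "I m \<le> S m" "0 < I v" "0 < I u" "I u \<le> S u" using SI m v u by auto
    then have "S u / I v = (S u / I m) * (I m / I v)" by (simp add: field_simps)
    also have "\<dots> \<le> (S u / I m) * (S m / I v)"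
      using \<open>0 < I m\<close> \<open>I m \<le> S m\<close> \<open>0 < I v\<close> \<open>0 < I u\<close> \<open>I u \<le> S u\<close>
      by (intro mult_left_mono divide_right_mono) auto
    finally show ?thesis .
  qed
  have nn: "0 \<le> S a / I b" if "0 < a" "a \<le> D" "0 < b" "b \<le> D" for a b
    using SI[OF that(1,2)] SI[OF that(3,4)] by auto
  show "S u / I v \<le> K1 * K2"
  proof (cases "y * v \<le> D")
    case True
    define m where "m = y * v"
    have m: "0 < m" "m \<le> D" using True y v by (auto simp: m_def)
    have "u = x * m" using uv by (simp add: m_def mult_ac)
    then have a: "S u / I m \<le> K1" using P1[unfolded Pk_def, rule_format, OF u m] by blast
    have b: "S m / I v \<le> K2" using P2[unfolded Pk_def, rule_format, OF m v] by (simp add: m_def)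
    have "S u / I v \<le> (S u / I m) * (S m / I v)" by (rule key[OF m])
    also have "\<dots> \<le> K1 * K2"
      using a b nn[OF u m] nn[OF m v] by (intro mult_mono) auto
    finally show ?thesis .
  next
    case False
    define m where "m = x * v"
    have "x < 1"
    proof (rule ccontr)
      assume "\<not> x < 1"
      then have "1 * (y * v) \<le> x * (y * v)" using y v by (intro mult_right_mono) auto
      moreover have "x * (y * v) = u" using uv by (simp add: mult.assoc)
      ultimately show False using False u by linarith
    qed
    have "x * v \<le> 1 * v" using \<open>x < 1\<close> v by (intro mult_right_mono) auto
    then have "x * v \<le> D" using v by linarith
    then have m: "0 < m" "m \<le> D" using x v unfolding m_def by auto
    have "u = y * m" using uv by (simp add: m_def mult_ac)
    then have a: "S u / I m \<le> K2" using P2[unfolded Pk_def, rule_format, OF u m] by blast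
    have b: "S m / I v \<le> K1" using P1[unfolded Pk_def, rule_format, OF m v] by (simp add: m_def)
    have "S u / I v \<le> (S u / I m) * (S m / I v)" by (rule key[OF m])
    also have "\<dots> \<le> K2 * K1"
      using a b nn[OF u m] nn[OF m v] by (intro mult_mono) auto
    finally show ?thesis by (simp add: mult.commute)
  qed
qed

lemma P_pow: assumes "z > 0" "P z M" shows "P (z ^ Suc n) (M ^ Suc n)"
proof (induction n)
  case 0 then show ?case using assms by simp
next
  case (Suc n)
  have "P (z * z ^ Suc n) (M * M ^ Suc n)"
    by (rule P_mult) (use assms Suc in auto)
  then show ?case by simp
qed

lemma P_cpt:
  assumes reg: "\<exists>\<eta>>0. \<exists>M. \<forall>x. 0 < x \<and> \<bar>x - 1\<bar> < \<eta> \<longrightarrow> P x M"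
    and a: "0 < a"
  shows "\<exists>M. \<forall>x\<in>{a..b}. P x M"
proof (cases "a \<le> b")
  case False then show ?thesis by auto
next
  case True
  obtain \<eta> M where eta: "\<eta> > 0" and M: "\<And>x. 0 < x \<Longrightarrow> \<bar>x - 1\<bar> < \<eta> \<Longrightarrow> P x M"
    using reg by blast
  have b: "0 < b" using a True by simp
  have "\<forall>\<^sub>F n in sequentially. \<bar>root n a - 1\<bar> < \<eta>"
    using LIMSEQ_root_const[OF a] eta unfolding tendsto_iff dist_real_def by blast
  moreover have "\<forall>\<^sub>F n in sequentially. \<bar>root n b - 1\<bar> < \<eta>"
    using LIMSEQ_root_const[OF b] eta unfolding tendsto_iff dist_real_def by blast
  moreover have "\<forall>\<^sub>F n in sequentially. n \<ge> 1" by (rule eventually_ge_at_top)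
  ultimately have "\<forall>\<^sub>F n in sequentially. \<bar>root n a - 1\<bar> < \<eta> \<and> \<bar>root n b - 1\<bar> < \<eta> \<and> n \<ge> 1"
    by eventually_elim auto
  then obtain N where N: "\<And>n. n \<ge> N \<Longrightarrow> \<bar>root n a - 1\<bar> < \<eta> \<and> \<bar>root n b - 1\<bar> < \<eta> \<and> n \<ge> 1"
    unfolding eventually_sequentially by blast
  define n where "n = N"
  have n: "\<bar>root n a - 1\<bar> < \<eta>" "\<bar>root n b - 1\<bar> < \<eta>" "n \<ge> 1"
    using N[of N] by (auto simp: n_def)
  then obtain k where k: "n = Suc k" by (cases n) auto
  show ?thesis
  proof (intro exI ballI)
    fix x assume x: "x \<in> {a..b}"
    then have x0: "0 < x" using a by auto
    have r1: "root n a \<le> root n x" using x n(3) by (intro real_root_le_mono) auto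
    have r2: "root n x \<le> root n b" using x n(3) by (intro real_root_le_mono) auto
    have "\<bar>root n x - 1\<bar> < \<eta>" using n(1,2) r1 r2 by (auto simp: abs_less_iff)
    moreover have rx: "0 < root n x" using x0 n(3) by simp
    ultimately have "P (root n x) M" using M by blast
    from P_pow[OF rx this, of k] have "P ((root n x) ^ n) (M ^ n)" by (simp add: k)
    then show "P x (M ^ n)" using x0 n(3) by simp
  qed
qed

lemma P_up:
  assumes x1: "x1 > 1" and P1: "P x1 (x1 powr c)"
    and cpt: "\<And>a b. 0 < a \<Longrightarrow> \<exists>M. \<forall>x\<in>{a..b}. P x M"
    and x0: "x0 > 0"
  shows "\<exists>C>0. \<forall>x\<ge>x0. P x (C * x powr c)"
proof -
  define a where "a = min x0 1"
  have a: "0 < a" "a \<le> 1" "a \<le> x0" using x0 by (auto simp: a_def)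
  obtain M where M: "\<And>x. x \<in> {a..x1} \<Longrightarrow> P x M" using cpt[OF a(1)] by blast
  define m where "m = min (a powr c) (x1 powr c)"
  have m: "m > 0" using a x1 by (simp add: m_def)
  define C where "C = max 1 M / m"
  have C: "C > 0" using m by (simp add: C_def)
  have base: "P x (C * x powr c)" if x: "x \<in> {a..x1}" for x
  proof -
    have "m \<le> x powr c"
    proof (cases "c \<ge> 0")
      case True then show ?thesis using x a unfolding m_def
        by (metis atLeastAtMost_iff min.coboundedI1 powr_mono2 less_imp_le)
    next
      case False
      have "x1 powr c \<le> x powr c"
        using x a False by (intro powr_mono2') auto
      then show ?thesis unfolding m_def by linarith
    qed
    then have "max 1 M * 1 \<le> max 1 M * (x powr c / m)" using m by (intro mult_left_mono) auto
    then have "max 1 M \<le> C * x powr c" by (simp add: C_def)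
    then have "M \<le> C * x powr c" by (metis max.cobounded2 order_trans)
    then show ?thesis by (rule P_mono[OF M[OF x]])
  qed
  have step: "\<forall>x\<in>{a..x1 ^ Suc n}. P x (C * x powr c)" for n
  proof (induction n)
    case 0 then show ?case using base by simp
  next
    case (Suc n)
    show ?case
    proof
      fix x assume x: "x \<in> {a..x1 ^ Suc (Suc n)}"
      show "P x (C * x powr c)"
      proof (cases "x \<le> x1")
        case True then show ?thesis using base x by auto
      next
        case False
        define y where "y = x / x1"
        have "1 \<le> y" using False x1 by (simp add: y_def field_simps)
        moreover have "y \<le> x1 ^ Suc n" using x x1 by (simp add: y_def field_simps)
        ultimately have y: "y \<in> {a..x1 ^ Suc n}" using a by auto
        have "P (x1 * y) (x1 powr c * (C * y powr c))"
          by (rule P_mult) (use x1 y a P1 Suc in auto)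
        moreover have "x1 * y = x" using x1 by (simp add: y_def)
        moreover have "x1 powr c * (C * y powr c) = C * x powr c"
          using x1 y a by (simp add: y_def powr_divide)
        ultimately show ?thesis by simp
      qed
    qed
  qed
  show ?thesis
  proof (intro exI[of _ C] conjI allI impI C)
    fix x assume "x0 \<le> x"
    obtain n where "x < x1 ^ n" using real_arch_pow[OF x1] by blast
    moreover have "x1 ^ n \<le> x1 ^ Suc n" using x1 by (intro power_increasing) auto
    ultimately have "x \<le> x1 ^ Suc n" by linarith
    then show "P x (C * x powr c)" using step[of n] \<open>x0 \<le> x\<close> a by auto
  qed
qed

lemma P_down:
  assumes x1: "0 < x1" "x1 < 1" and P1: "P x1 (x1 powr d)"
    and cpt: "\<And>a b. 0 < a \<Longrightarrow> \<exists>M. \<forall>x\<in>{a..b}. P x M"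
    and X0: "X0 > 0"
  shows "\<exists>C>0. \<forall>x. 0 < x \<longrightarrow> x \<le> X0 \<longrightarrow> P x (C * x powr d)"
proof -
  define A where "A = max X0 1"
  have A: "1 \<le> A" "X0 \<le> A" by (auto simp: A_def)
  obtain M where M: "\<And>x. x \<in> {x1..A} \<Longrightarrow> P x M" using cpt[OF x1(1)] by blast
  define m where "m = min (A powr d) (x1 powr d)"
  have m: "m > 0" using A x1 by (simp add: m_def)
  define C where "C = max 1 M / m"
  have C: "C > 0" using m by (simp add: C_def)
  have base: "P x (C * x powr d)" if x: "x \<in> {x1..A}" for x
  proof -
    have "m \<le> x powr d"
    proof (cases "d \<ge> 0")
      case True then show ?thesis using x x1 unfolding m_def
        by (metis atLeastAtMost_iff min.coboundedI2 powr_mono2 less_imp_le)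
    next
      case False
      have "A powr d \<le> x powr d"
        using x x1 False by (intro powr_mono2') auto
      then show ?thesis unfolding m_def by linarith
    qed
    then have "max 1 M * 1 \<le> max 1 M * (x powr d / m)" using m by (intro mult_left_mono) auto
    then have "max 1 M \<le> C * x powr d" by (simp add: C_def)
    then have "M \<le> C * x powr d" by (metis max.cobounded2 order_trans)
    then show ?thesis by (rule P_mono[OF M[OF x]])
  qed
  have step: "\<forall>x\<in>{x1 ^ Suc n..A}. P x (C * x powr d)" for n
  proof (induction n)
    case 0 then show ?case using base by simp
  next
    case (Suc n)
    show ?case
    proof
      fix x assume x: "x \<in> {x1 ^ Suc (Suc n)..A}"
      have xpos: "0 < x" using x x1 by (auto intro: less_le_trans[of 0 "x1 ^ Suc (Suc n)"])
      show "P x (C * x powr d)"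
      proof (cases "x1 \<le> x")
        case True then show ?thesis using base x by auto
      next
        case False
        define y where "y = x / x1"
        have "y < 1" using False x1 by (simp add: y_def)
        moreover have "x1 ^ Suc n \<le> y" using x x1 by (auto simp: y_def field_simps)
        ultimately have y: "y \<in> {x1 ^ Suc n..A}" using A by auto
        have ypos: "0 < y" using xpos x1 by (simp add: y_def)
        have "P (x1 * y) (x1 powr d * (C * y powr d))"
          by (rule P_mult) (use x1 y ypos P1 Suc in auto)
        moreover have "x1 * y = x" using x1 by (simp add: y_def)
        moreover have "x1 powr d * (C * y powr d) = C * x powr d"
          using x1 xpos by (simp add: y_def powr_divide)
        ultimately show ?thesis by simp
      qed
    qed
  qed
  show ?thesis
  proof (intro exI[of _ C] conjI allI impI C)
    fix x assume x: "0 < x" "x \<le> X0"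
    obtain n where n: "x1 ^ n < x" using real_arch_pow_inv[OF x(1) x1(2)] by blast
    have "x1 ^ Suc n \<le> x1 ^ n" using x1 by (simp add: power_decreasing)
    then have "x1 ^ Suc n \<le> x" using n by linarith
    then show "P x (C * x powr d)" using step[of n] x A by auto
  qed
qed

end
lemma minmax:
  fixes w :: "complex \<Rightarrow> real"
  assumes C: "compact C" "C \<noteq> {}" and cw: "continuous_on C w" and pos: "\<forall>\<tau>\<in>C. 0 < w \<tau>"
  shows "0 < Inf (w ` C) \<and> (\<forall>\<tau>\<in>C. Inf (w ` C) \<le> w \<tau> \<and> w \<tau> \<le> Sup (w ` C))"
proof -
  obtain a where a: "a \<in> C" "\<forall>y\<in>C. w a \<le> w y" using continuous_attains_inf[OF C cw] by blast
  obtain b where b: "b \<in> C" "\<forall>y\<in>C. w y \<le> w b" using continuous_attains_sup[OF C cw] by blast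
  have "Inf (w ` C) = w a" using a by (intro cInf_eq_minimum) auto
  moreover have "Sup (w ` C) = w b" using b by (intro cSup_eq_maximum) auto
  ultimately show ?thesis using a b pos by auto
qed

lemma dmax_facts:
  fixes \<Gamma> :: "complex set"
  assumes cpt: "compact \<Gamma>" and con: "connected \<Gamma>" and t0: "t0 \<in> \<Gamma>"
  shows "(\<forall>\<tau>\<in>\<Gamma>. cmod (\<tau> - t0) \<le> dmax \<Gamma> t0) \<and>
         (\<forall>R. 0 \<le> R \<longrightarrow> R \<le> dmax \<Gamma> t0 \<longrightarrow> circ_pts \<Gamma> t0 R \<noteq> {})"
proof -
  define f where "f = (\<lambda>\<tau>::complex. cmod (\<tau> - t0))"
  have cf: "continuous_on \<Gamma> f" unfolding f_def by (intro continuous_intros)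
  obtain m where m: "m \<in> \<Gamma>" "\<forall>y\<in>\<Gamma>. f y \<le> f m"
    using continuous_attains_sup[OF cpt _ cf] t0 by blast
  have D: "dmax \<Gamma> t0 = f m" unfolding dmax_def f_def[symmetric]
    using m by (intro cSup_eq_maximum) auto
  have conn: "connected (f ` \<Gamma>)" by (rule connected_continuous_image[OF cf con])
  have "R \<in> f ` \<Gamma>" if "0 \<le> R" "R \<le> f m" for R
  proof -
    have "f t0 \<in> f ` \<Gamma>" "f m \<in> f ` \<Gamma>" using t0 m by auto
    moreover have "f t0 = 0" by (simp add: f_def)
    ultimately show ?thesis using conn that unfolding connected_iff_interval by metis
  qed
  then show ?thesis using m D unfolding circ_pts_def f_def by fastforce
qed

lemma circ_compact:
  assumes "compact \<Gamma>" shows "compact (circ_pts \<Gamma> t0 R)"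
proof -
  have "circ_pts \<Gamma> t0 R = \<Gamma> \<inter> sphere t0 R"
    by (auto simp: circ_pts_def dist_norm norm_minus_commute)
  then show ?thesis using assms by auto
qed

lemma W_le:
  assumes x: "x > 0"
    and P: "Pk (\<lambda>u. Sup (w ` circ_pts \<Gamma> t0 u)) (\<lambda>v. Inf (w ` circ_pts \<Gamma> t0 v)) (dmax \<Gamma> t0) x K"
  shows "Wfun \<Gamma> t0 w x \<le> ereal K"
proof (cases "x \<le> 1")
  case True
  show ?thesis unfolding Wfun_def using True
  proof (simp, intro SUP_least)
    fix R assume R: "R \<in> {0<..dmax \<Gamma> t0}"
    have "x * R \<le> R" using True R x by (intro mult_left_le_one_le) auto
    then have "x * R \<le> dmax \<Gamma> t0" using R by (meson greaterThanAtMost_iff order_trans)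
    moreover have "0 < x * R" "0 < R" "R \<le> dmax \<Gamma> t0" using R x by auto
    ultimately have "Sup (w ` circ_pts \<Gamma> t0 (x * R)) / Inf (w ` circ_pts \<Gamma> t0 R) \<le> K"
      using P[unfolded Pk_def, rule_format, of "x * R" R] by blast
    then show "ereal (Sup (w ` circ_pts \<Gamma> t0 (x * R)) / Inf (w ` circ_pts \<Gamma> t0 R)) \<le> ereal K"
      by simp
  qed
next
  case False
  show ?thesis unfolding Wfun_def using False
  proof (simp, intro SUP_least)
    fix R assume R: "R \<in> {0<..dmax \<Gamma> t0}"
    have "R / x \<le> R" using False R by (simp add: field_simps)
    moreover have "R = x * (R / x)" using x by simp
    ultimately have "Sup (w ` circ_pts \<Gamma> t0 R) / Inf (w ` circ_pts \<Gamma> t0 (R / x)) \<le> K"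
      using P R x unfolding Pk_def by (metis divide_pos_pos greaterThanAtMost_iff order_trans)
    then show "ereal (Sup (w ` circ_pts \<Gamma> t0 R) / Inf (w ` circ_pts \<Gamma> t0 (R / x))) \<le> ereal K"
      by simp
  qed
qed

lemma W_ge:
  assumes x: "x > 0" and u: "0 < u" "u \<le> dmax \<Gamma> t0" and v: "0 < v" "v \<le> dmax \<Gamma> t0"
    and uv: "u = x * v"
  shows "ereal (Sup (w ` circ_pts \<Gamma> t0 u) / Inf (w ` circ_pts \<Gamma> t0 v)) \<le> Wfun \<Gamma> t0 w x"
proof (cases "x \<le> 1")
  case True
  show ?thesis unfolding Wfun_def using True
    by (simp, intro SUP_upper2[of v]) (use v uv in auto)
next
  case False
  have "u / x = v" using uv x by simp
  then show ?thesis unfolding Wfun_def using False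
    by (simp, intro SUP_upper2[of u]) (use u in auto)
qed

lemma W_imp_P:
  assumes x: "x > 0" and W: "Wfun \<Gamma> t0 w x \<le> ereal K"
  shows "Pk (\<lambda>u. Sup (w ` circ_pts \<Gamma> t0 u)) (\<lambda>v. Inf (w ` circ_pts \<Gamma> t0 v)) (dmax \<Gamma> t0) x K"
  unfolding Pk_def
proof (intro allI impI)
  fix u v assume uv: "0 < u" "u \<le> dmax \<Gamma> t0" "0 < v" "v \<le> dmax \<Gamma> t0" "u = x * v"
  have "ereal (Sup (w ` circ_pts \<Gamma> t0 u) / Inf (w ` circ_pts \<Gamma> t0 v)) \<le> ereal K"
    using order_trans[OF W_ge[OF x uv] W] .
  then show "Sup (w ` circ_pts \<Gamma> t0 u) / Inf (w ` circ_pts \<Gamma> t0 v) \<le> K" by simp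
qed

lemma near_in_omega:
  assumes pg: "path g" and t0: "t0 \<in> path_image g" and d: "\<delta> > 0"
  shows "\<exists>r0>0. \<forall>t\<in>path_image g. cmod (t - t0) < r0 \<longrightarrow> t \<in> omega_arc (path_image g) t0 \<delta>"
proof -
  define A where "A = {\<tau> \<in> path_image g. cmod (\<tau> - t0) < \<delta>}"
  define \<omega> where "\<omega> = omega_arc (path_image g) t0 \<delta>"
  have \<omega>: "\<omega> = connected_component_set A t0" by (simp add: \<omega>_def omega_arc_def A_def)
  define C where "C = {u \<in> {0..1}. g u \<notin> \<omega>}"
  define K where "K = closure C"
  have cg: "continuous_on {0..1} g" using pg by (simp add: path_def)
  have KI: "K \<subseteq> {0..1}" unfolding K_def C_def by (rule closure_minimal) auto
  have Kc: "compact K" unfolding K_def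
    by (metis C_def compact_closure bounded_subset bounded_closed_interval mem_Collect_eq subsetI)
  have Kt0: "g u \<noteq> t0" if u: "u \<in> K" for u
  proof
    assume gu: "g u = t0"
    have u01: "u \<in> {0..1}" using u KI by auto
    obtain h where h: "h > 0" "\<forall>u'\<in>{0..1}. dist u' u < h \<longrightarrow> dist (g u') (g u) < \<delta>"
      using cg u01 d unfolding continuous_on_iff by blast
    obtain u' where u': "u' \<in> C" "dist u' u < h"
      using u h(1) unfolding K_def closure_approachable by blast
    have u'01: "u' \<in> {0..1}" using u' by (simp add: C_def)
    have seg: "closed_segment u' u \<subseteq> {0..1} \<inter> {z. dist z u < h}"
    proof
      fix z assume z: "z \<in> closed_segment u' u"
      then have "z \<in> {min u' u..max u' u}" by (auto simp: closed_segment_eq_real_ivl split: if_splits)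
      then show "z \<in> {0..1} \<inter> {z. dist z u < h}" using u01 u'01 u'(2)
        by (auto simp: dist_real_def)
    qed
    define T where "T = g ` closed_segment u' u"
    have Tc: "connected T" unfolding T_def
      by (intro connected_continuous_image connected_segment continuous_on_subset[OF cg]) (use seg in auto)
    have TA: "T \<subseteq> A"
    proof
      fix y assume "y \<in> T"
      then obtain z where z: "z \<in> closed_segment u' u" "y = g z" by (auto simp: T_def)
      then have "z \<in> {0..1}" "dist z u < h" using seg by auto
      then have "dist (g z) t0 < \<delta>" using h gu by auto
      moreover have "g z \<in> path_image g" using \<open>z \<in> {0..1}\<close> by (simp add: path_image_def)
      ultimately show "y \<in> A" using z by (simp add: A_def dist_norm)
    qed
    have "t0 \<in> T" using gu by (auto simp: T_def)
    then have "T \<subseteq> \<omega>" unfolding \<omega> using connected_component_maximal Tc TA by blast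
    moreover have "g u' \<in> T" by (auto simp: T_def)
    ultimately show False using u' unfolding C_def by blast
  qed
  have main: "\<exists>r0>0. \<forall>u\<in>K. r0 \<le> cmod (g u - t0)"
  proof (cases "K = {}")
    case True then show ?thesis by (intro exI[of _ 1]) auto
  next
    case False
    have "continuous_on K (\<lambda>u. cmod (g u - t0))"
      by (intro continuous_intros continuous_on_subset[OF cg KI])
    then obtain m where m: "m \<in> K" "\<forall>y\<in>K. cmod (g m - t0) \<le> cmod (g y - t0)"
      using continuous_attains_inf[OF Kc False] by blast
    then show ?thesis using Kt0[OF m(1)] by (intro exI[of _ "cmod (g m - t0)"]) auto
  qed
  then obtain r0 where r0: "r0 > 0" "\<forall>u\<in>K. r0 \<le> cmod (g u - t0)" by blast
  show ?thesis
  proof (intro exI[of _ r0] conjI ballI impI r0(1))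
    fix t assume t: "t \<in> path_image g" "cmod (t - t0) < r0"
    then obtain u where u: "u \<in> {0..1}" "t = g u" by (auto simp: path_image_def)
    show "t \<in> omega_arc (path_image g) t0 \<delta>"
    proof (rule ccontr)
      assume "t \<notin> omega_arc (path_image g) t0 \<delta>"
      then have "u \<in> C" using u unfolding C_def \<omega>_def by auto
      then have "u \<in> K" using closure_subset unfolding K_def by blast
      then have "r0 \<le> cmod (g u - t0)" using r0(2) by blast
      then show False using t(2) u(2) by simp
    qed
  qed
qed

theorem lemma3p2:
  fixes g :: "real \<Rightarrow> complex" and t0 :: complex and w :: "complex \<Rightarrow> real"
    and \<epsilon> \<delta> :: real
  assumes "carleson_curve g"
    and "t0 \<in> path_image g"
    and "continuous_on (path_image g - {t0}) w"
    and "\<forall>\<tau>\<in>path_image g - {t0}. w \<tau> > 0"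
    and "regular_fun (Wfun (path_image g) t0 w)"
    and "\<epsilon> > 0" and "0 < \<delta>" and "\<delta> < dmax (path_image g) t0"
  shows "\<exists>C1>0. \<exists>C2>0.
    (\<forall>t\<in>path_image g - omega_arc (path_image g) t0 \<delta>.
       \<forall>\<tau>\<in>omega_arc (path_image g) t0 \<delta> - {t0}.
         w t / w \<tau> \<le> C1 * cmod ((t - t0) / (\<tau> - t0))
                     powr (real_of_ereal (beta_idx (Wfun (path_image g) t0 w)) + \<epsilon>)) \<and>
    (\<forall>t\<in>omega_arc (path_image g) t0 \<delta> - {t0}.
       \<forall>\<tau>\<in>path_image g - omega_arc (path_image g) t0 \<delta>.
         w t / w \<tau> \<le> C2 * cmod ((t - t0) / (\<tau> - t0))
                     powr (real_of_ereal (alpha_idx (Wfun (path_image g) t0 w)) - \<epsilon>))"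
proof -
  note eps = assms(6) and d = assms(7)
  define \<Gamma> where "\<Gamma> = path_image g"
  have pg: "path g" using assms(1) by (simp add: carleson_curve_def simple_path_imp_path)
  have cpt: "compact \<Gamma>" using pg by (simp add: \<Gamma>_def compact_path_image)
  have con: "connected \<Gamma>" using pg by (simp add: \<Gamma>_def connected_path_image)
  have t0: "t0 \<in> \<Gamma>" using assms(2) by (simp add: \<Gamma>_def)
  have cw: "continuous_on (\<Gamma> - {t0}) w" using assms(3) by (simp add: \<Gamma>_def)
  have wpos: "\<And>\<tau>. \<tau> \<in> \<Gamma> \<Longrightarrow> \<tau> \<noteq> t0 \<Longrightarrow> 0 < w \<tau>" using assms(4) by (auto simp: \<Gamma>_def)
  define D where "D = dmax \<Gamma> t0"
  define S where "S = (\<lambda>u. Sup (w ` circ_pts \<Gamma> t0 u))"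
  define I where "I = (\<lambda>v. Inf (w ` circ_pts \<Gamma> t0 v))"
  define W where "W = Wfun \<Gamma> t0 w"
  have dD: "\<delta> < D" using assms(8) by (simp add: D_def \<Gamma>_def)
  have Dpos: "D > 0" using d dD by simp
  have dm: "\<And>\<tau>. \<tau> \<in> \<Gamma> \<Longrightarrow> cmod (\<tau> - t0) \<le> D"
    and ne: "\<And>R. 0 \<le> R \<Longrightarrow> R \<le> D \<Longrightarrow> circ_pts \<Gamma> t0 R \<noteq> {}"
    using dmax_facts[OF cpt con t0] by (auto simp: D_def)
  have SIu: "0 < I u \<and> (\<forall>\<tau>\<in>circ_pts \<Gamma> t0 u. I u \<le> w \<tau> \<and> w \<tau> \<le> S u)"
    if u: "0 < u" "u \<le> D" for u
  proof -
    have sub: "circ_pts \<Gamma> t0 u \<subseteq> \<Gamma> - {t0}" using u by (auto simp: circ_pts_def)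
    show ?thesis unfolding S_def I_def
      by (rule minmax[OF circ_compact[OF cpt] ne continuous_on_subset[OF cw sub]])
         (use u sub wpos in auto)
  qed
  have SI: "0 < I u \<and> I u \<le> S u" if u: "0 < u" "u \<le> D" for u
  proof -
    obtain \<tau> where "\<tau> \<in> circ_pts \<Gamma> t0 u" using ne[of u] u by auto
    then show ?thesis using SIu[OF u] by force
  qed
  interpret SIloc S I D
    by unfold_locales (use Dpos SI in auto)
  have PW: "W x \<le> ereal K" if "x > 0" "P x K" for x K
    using W_le[of x w \<Gamma> t0 K] that by (simp add: W_def S_def I_def D_def)
  have WP: "P x K" if "x > 0" "W x \<le> ereal K" for x K
    using W_imp_P[of x \<Gamma> t0 w K] that by (simp add: W_def S_def I_def D_def)
  have WG: "ereal (S u / I v) \<le> W x"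
    if "x > 0" "0 < u" "u \<le> D" "0 < v" "v \<le> D" "u = x * v" for x u v
    using W_ge[of x u \<Gamma> t0 v w] that by (simp add: W_def S_def I_def D_def)
  have reg: "\<exists>\<eta>>0. \<exists>M. \<forall>x. 0 < x \<and> \<bar>x - 1\<bar> < \<eta> \<longrightarrow> P x M"
  proof -
    obtain \<eta> M where "\<eta> > 0" "\<forall>x. 0 < x \<and> \<bar>x - 1\<bar> < \<eta> \<longrightarrow> W x \<le> ereal M"
      using assms(5) unfolding regular_fun_def W_def \<Gamma>_def by blast
    then show ?thesis using WP by blast
  qed
  have cpt': "\<exists>M. \<forall>x\<in>{a..b}. P x M" if "0 < a" for a b
    by (rule P_cpt[OF reg that])
  define \<rho> where "\<rho> = (\<lambda>x. real_of_ereal (W x))"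
  have fin: "W x = ereal (\<rho> x) \<and> 0 < \<rho> x \<and> P x (\<rho> x)" if x: "x > 0" for x
  proof -
    obtain K where K: "P x K" using cpt'[of x x] x by auto
    have up: "W x \<le> ereal K" by (rule PW[OF x K])
    define v where "v = min D (D / x)"
    define u where "u = x * v"
    have v: "0 < v" "v \<le> D" using Dpos x by (auto simp: v_def)
    have "x * v \<le> x * (D / x)" using x by (intro mult_left_mono) (auto simp: v_def)
    then have u: "0 < u" "u \<le> D" using x v by (auto simp: u_def)
    have lo: "ereal (S u / I v) \<le> W x" by (rule WG[OF x u v]) (simp add: u_def)
    have pos: "0 < S u / I v" using SI[OF u] SI[OF v] by auto
    have "\<bar>W x\<bar> \<noteq> \<infinity>" using up lo by auto
    then have eq: "W x = ereal (\<rho> x)" by (simp add: \<rho>_def ereal_real')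
    have "S u / I v \<le> \<rho> x" using lo eq by simp
    then have "0 < \<rho> x" using pos by linarith
    moreover have "P x (\<rho> x)" using WP[OF x] eq by simp
    ultimately show ?thesis using eq by simp
  qed
  define c where "c = real_of_ereal (beta_idx W) + \<epsilon>"
  have termb: "(if W x = \<infinity> then \<infinity> else ereal (ln (real_of_ereal (W x)) / ln x)) = ereal (ln (\<rho> x) / ln x)"
    if "x > 1" for x
  proof -
    have eq: "W x = ereal (\<rho> x)" using fin[of x] that by simp
    show ?thesis by (simp add: eq)
  qed
  have bl: "beta_idx W < ereal c"
  proof -
    have "beta_idx W \<le> (if W 2 = \<infinity> then \<infinity> else ereal (ln (real_of_ereal (W 2)) / ln 2))"
      unfolding beta_idx_def by (rule INF_lower) simp
    then have "beta_idx W \<le> ereal (ln (\<rho> 2) / ln 2)" using termb[of 2] by simp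
    then show ?thesis using eps by (cases "beta_idx W") (auto simp: c_def)
  qed
  then obtain x1 where x1: "x1 > 1"
    "(if W x1 = \<infinity> then \<infinity> else ereal (ln (real_of_ereal (W x1)) / ln x1)) < ereal c"
    unfolding beta_idx_def INF_less_iff by auto
  then have "ln (\<rho> x1) / ln x1 < c" using termb[OF x1(1)] by simp
  then have "ln (\<rho> x1) < c * ln x1" using x1(1) by (simp add: pos_divide_less_eq)
  then have "exp (ln (\<rho> x1)) < exp (c * ln x1)" by simp
  then have "\<rho> x1 < x1 powr c" using fin[of x1] x1(1) by (simp add: powr_def)
  then have P1: "P x1 (x1 powr c)" using fin[of x1] x1(1) P_mono[of x1 "\<rho> x1"] by simp
  define dd where "dd = real_of_ereal (alpha_idx W) - \<epsilon>"
  have terma: "(if W x = \<infinity> then -\<infinity> else ereal (ln (real_of_ereal (W x)) / ln x)) = ereal (ln (\<rho> x) / ln x)"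
    if "x > 0" for x
  proof -
    have eq: "W x = ereal (\<rho> x)" using fin[of x] that by simp
    show ?thesis by (simp add: eq)
  qed
  have al: "ereal dd < alpha_idx W"
  proof -
    have "(if W (1/2) = \<infinity> then -\<infinity> else ereal (ln (real_of_ereal (W (1/2))) / ln (1/2))) \<le> alpha_idx W"
      unfolding alpha_idx_def by (rule SUP_upper) simp
    then have "ereal (ln (\<rho> (1/2)) / ln (1/2)) \<le> alpha_idx W" using terma[of "1/2"] by simp
    then show ?thesis using eps by (cases "alpha_idx W") (auto simp: dd_def)
  qed
  then obtain y1 where y1: "0 < y1" "y1 < 1"
    "ereal dd < (if W y1 = \<infinity> then -\<infinity> else ereal (ln (real_of_ereal (W y1)) / ln y1))"
    unfolding alpha_idx_def less_SUP_iff by auto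
  then have "dd < ln (\<rho> y1) / ln y1" using terma[OF y1(1)] by simp
  moreover have "ln y1 < 0" using y1 by simp
  ultimately have "ln (\<rho> y1) < dd * ln y1" by (simp add: neg_less_divide_eq)
  then have "exp (ln (\<rho> y1)) < exp (dd * ln y1)" by simp
  then have "\<rho> y1 < y1 powr dd" using fin[of y1] y1(1) by (simp add: powr_def)
  then have P2: "P y1 (y1 powr dd)" using fin[of y1] y1(1) P_mono[of y1 "\<rho> y1"] by simp
  define \<omega> where "\<omega> = omega_arc \<Gamma> t0 \<delta>"
  obtain r0 where r0: "r0 > 0" "\<And>t. t \<in> \<Gamma> \<Longrightarrow> cmod (t - t0) < r0 \<Longrightarrow> t \<in> \<omega>"
    using near_in_omega[OF pg assms(2) d] unfolding \<Gamma>_def[symmetric] \<omega>_def by blast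
  have \<omega>sub: "\<And>\<tau>. \<tau> \<in> \<omega> \<Longrightarrow> \<tau> \<in> \<Gamma> \<and> cmod (\<tau> - t0) < \<delta>"
    using connected_component_subset unfolding \<omega>_def omega_arc_def by blast
  have t0\<omega>: "t0 \<in> \<omega>" using t0 d unfolding \<omega>_def omega_arc_def by simp
  have far: "\<And>t. t \<in> \<Gamma> - \<omega> \<Longrightarrow> r0 \<le> cmod (t - t0)"
    using r0(2) by (meson DiffE not_le)
  have key: "w t / w \<tau> \<le> K"
    if t: "t \<in> \<Gamma>" "t \<noteq> t0" and \<tau>: "\<tau> \<in> \<Gamma>" "\<tau> \<noteq> t0"
      and P: "P (cmod (t - t0) / cmod (\<tau> - t0)) K" for t \<tau> K
  proof -
    define r where "r = cmod (t - t0)"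
    define s where "s = cmod (\<tau> - t0)"
    have r: "0 < r" "r \<le> D" using t dm by (auto simp: r_def)
    have s: "0 < s" "s \<le> D" using \<tau> dm by (auto simp: s_def)
    have "r = (r / s) * s" using s by simp
    then have "S r / I s \<le> K" using P[unfolded Pk_def, rule_format, OF r s] by (simp add: r_def s_def)
    moreover have "w t \<le> S r" using SIu[OF r] t by (auto simp: circ_pts_def r_def)
    moreover have "I s \<le> w \<tau>" using SIu[OF s] \<tau> by (auto simp: circ_pts_def s_def)
    moreover have "0 < I s" "0 \<le> S r" using SI[OF s] SI[OF r] by auto
    ultimately have "w t / w \<tau> \<le> S r / I s" by (intro frac_le) auto
    also have "\<dots> \<le> K" by fact
    finally show ?thesis .
  qed
  obtain C1 where C1: "C1 > 0" "\<And>x. x \<ge> r0 / \<delta> \<Longrightarrow> P x (C1 * x powr c)"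
    using P_up[OF x1(1) P1 cpt', of "r0 / \<delta>"] r0(1) d by auto
  obtain C2 where C2: "C2 > 0" "\<And>x. 0 < x \<Longrightarrow> x \<le> \<delta> / r0 \<Longrightarrow> P x (C2 * x powr dd)"
    using P_down[OF y1(1,2) P2 cpt', of "\<delta> / r0"] r0(1) d by auto
  have part1: "w t / w \<tau> \<le> C1 * cmod ((t - t0) / (\<tau> - t0)) powr c"
    if t: "t \<in> \<Gamma> - \<omega>" and \<tau>: "\<tau> \<in> \<omega> - {t0}" for t \<tau>
  proof -
    have tt: "t \<in> \<Gamma>" "t \<noteq> t0" using t t0\<omega> by auto
    have \<tau>\<tau>: "\<tau> \<in> \<Gamma>" "\<tau> \<noteq> t0" "cmod (\<tau> - t0) < \<delta>" using \<tau> \<omega>sub by auto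
    have "r0 / \<delta> \<le> cmod (t - t0) / cmod (\<tau> - t0)"
      using far[OF t] \<tau>\<tau> r0(1) by (intro frac_le) auto
    then have "P (cmod (t - t0) / cmod (\<tau> - t0)) (C1 * (cmod (t - t0) / cmod (\<tau> - t0)) powr c)"
      by (rule C1(2))
    from key[OF tt \<tau>\<tau>(1,2) this] show ?thesis by (simp add: norm_divide)
  qed
  have part2: "w t / w \<tau> \<le> C2 * cmod ((t - t0) / (\<tau> - t0)) powr dd"
    if t: "t \<in> \<omega> - {t0}" and \<tau>: "\<tau> \<in> \<Gamma> - \<omega>" for t \<tau>
  proof -
    have \<tau>\<tau>: "\<tau> \<in> \<Gamma>" "\<tau> \<noteq> t0" using \<tau> t0\<omega> by auto
    have tt: "t \<in> \<Gamma>" "t \<noteq> t0" "cmod (t - t0) < \<delta>" using t \<omega>sub by auto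
    have "cmod (t - t0) / cmod (\<tau> - t0) \<le> \<delta> / r0"
      using far[OF \<tau>] tt r0(1) d by (intro frac_le) auto
    moreover have "0 < cmod (t - t0) / cmod (\<tau> - t0)" using tt \<tau>\<tau> by auto
    ultimately have "P (cmod (t - t0) / cmod (\<tau> - t0)) (C2 * (cmod (t - t0) / cmod (\<tau> - t0)) powr dd)"
      using C2(2) by blast
    from key[OF tt(1,2) \<tau>\<tau> this] show ?thesis by (simp add: norm_divide)
  qed
  show ?thesis
    unfolding \<Gamma>_def[symmetric] W_def[symmetric] c_def[symmetric] dd_def[symmetric] \<omega>_def[symmetric]
    using C1(1) C2(1) part1 part2 by blast
qed

end
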